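(* Let $n$ be a prime with $n\equiv 1$ or $5\pmod 6$. Then there exists a one-factorization $\mathcal{R}$ of $K_{2n}$ on the vertex set $\{0,1,\dots,2n-1\}$ such that: (1) if $n\equiv 5\pmod 6$, then $\mathcal{R}=\{\mathcal{R}_{i,j}: 1\le i\le \frac{2n-1}{3},\ 1\le j\le 3\}$, where $\mathcal{R}_{i,1}\cup\mathcal{R}_{i,2}\cup\mathcal{R}_{i,3}=\mathcal{A}_i\cup\mathcal{B}_i\cup\mathcal{C}_{i-1}$ for $1\le i\le\frac{n-1}{2}$, and $\mathcal{R}_{i,1}=\mathcal{C}_{3i-n-2}$, $\mathcal{R}_{i,2}=\mathcal{C}_{3i-n-1}$, $\mathcal{R}_{i,3}=\mathcal{C}_{3i-n}$ for $\frac{n+1}{2}\le i\le\frac{2n-1}{3}$; (2) if $n\equiv 1\pmod 6$, then $\mathcal{R}=\{\mathcal{R}_{i,j}: 1\le i\le\frac{n-1}{2},\ 1\le j\le 3\}\cup\{\mathcal{C}_i:\frac{n-1}{2}\le i\le n-1\}$, where $\mathcal{R}_{i,1}\cup\mathcal{R}_{i,2}\cup\mathcal{R}_{i,3}=\mathcal{A}_i\cup\mathcal{B}_i\cup\mathcal{C}_{i-1}$ for $1\le i\le \frac{n-1}{2}$.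
   Context: For $1\le i\le \frac{n-1}{2}$: $\mathcal{A}_i=\{\{x,y\}: x,y\in\{0,\dots,n-1\},\ y-x\equiv i \pmod n\}$ and $\mathcal{B}_i=\{\{x,y\}: x,y\in\{n,\dots,2n-1\},\ y-x\equiv i\pmod n\}$. For $0\le i\le n-1$: $\mathcal{C}_i=\{\{x,y\}: 0\le x\le n-1,\ n\le y\le 2n-1,\ x+y\equiv i\pmod n\}$. A one-factor of $K_{2n}$ is a perfect matching; a one-factorization is a partition of the edge set of $K_{2n}$ into $2n-1$ one-factors. *)

theory Defs
  imports "HOL-Computational_Algebra.Primes" "HOL-Number_Theory.Cong" "HOL-Library.Disjoint_Sets"
begin

definition K_edges :: "nat \<Rightarrow> nat set set" where
  "K_edges n = {{x, y} | x y. x < 2*n \<and> y < 2*n \<and> x \<noteq> y}"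

definition A_set :: "nat \<Rightarrow> nat \<Rightarrow> nat set set" where
  "A_set n i = {{x, y} | x y. x \<le> n - 1 \<and> y \<le> n - 1 \<and> [int y - int x = int i] (mod int n)}"

definition B_set :: "nat \<Rightarrow> nat \<Rightarrow> nat set set" where
  "B_set n i = {{x, y} | x y. n \<le> x \<and> x \<le> 2*n - 1 \<and> n \<le> y \<and> y \<le> 2*n - 1
                           \<and> [int y - int x = int i] (mod int n)}"

definition C_set :: "nat \<Rightarrow> nat \<Rightarrow> nat set set" where
  "C_set n i = {{x, y} | x y. x \<le> n - 1 \<and> n \<le> y \<and> y \<le> 2*n - 1 \<and> [x + y = i] (mod n)}"

definition one_factor :: "nat \<Rightarrow> nat set set \<Rightarrow> bool" where
  "one_factor n M \<longleftrightarrow> M \<subseteq> K_edges n \<and> (\<forall>v < 2*n. \<exists>!e. e \<in> M \<and> v \<in> e)"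

definition one_factorization :: "nat \<Rightarrow> nat set set set \<Rightarrow> bool" where
  "one_factorization n F \<longleftrightarrow> partition_on (K_edges n) F \<and> card F = 2*n - 1
      \<and> (\<forall>M\<in>F. one_factor n M)"

end

theory Submission
  imports Defs
begin


definition fpfi :: "nat \<Rightarrow> (nat \<Rightarrow> nat) \<Rightarrow> bool" where
  "fpfi n p \<longleftrightarrow> (\<forall>v<2*n. p v < 2*n \<and> p v \<noteq> v \<and> p (p v) = v)"

definition Mf :: "nat \<Rightarrow> (nat \<Rightarrow> nat) \<Rightarrow> nat set set" where
  "Mf n p = {{v, p v} | v. v < 2*n}"

lemma Mf_mem:
  assumes "fpfi n p" "v < 2*n" "e \<in> Mf n p" "v \<in> e"
  shows "e = {v, p v}"
proof -
  obtain w where w: "w < 2*n" "e = {w, p w}" using assms(3) unfolding Mf_def by auto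
  then show ?thesis using assms(1,4) unfolding fpfi_def by auto
qed

lemma one_factor_Mf:
  assumes "fpfi n p" shows "one_factor n (Mf n p)"
  unfolding one_factor_def
proof (intro conjI allI impI)
  show "Mf n p \<subseteq> K_edges n"
    using assms unfolding Mf_def K_edges_def fpfi_def by fastforce
  fix v assume v: "v < 2*n"
  have "{v, p v} \<in> Mf n p" using v unfolding Mf_def by auto
  then show "\<exists>!e. e \<in> Mf n p \<and> v \<in> e" using Mf_mem[OF assms v] by auto
qed

lemma general:
  fixes Inv :: "'k \<Rightarrow> nat \<Rightarrow> nat"
  assumes fin: "finite K" and cK: "card K = 2*n - 1" and n: "n \<ge> 1"
    and inv: "\<And>k. k \<in> K \<Longrightarrow> fpfi n (Inv k)"
    and cov: "\<And>x y. x < 2*n \<Longrightarrow> y < 2*n \<Longrightarrow> x \<noteq> y \<Longrightarrow> \<exists>k\<in>K. Inv k x = y"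
  shows "one_factorization n ((\<lambda>k. Mf n (Inv k)) ` K) \<and> inj_on (\<lambda>k. Mf n (Inv k)) K"
proof -
  have injx: "inj_on (\<lambda>k. Inv k x) K" if x: "x < 2*n" for x
  proof (rule eq_card_imp_inj_on[OF fin])
    have "(\<lambda>k. Inv k x) ` K = {..<2*n} - {x}"
    proof
      show "(\<lambda>k. Inv k x) ` K \<subseteq> {..<2*n} - {x}" using inv x unfolding fpfi_def by auto
      show "{..<2*n} - {x} \<subseteq> (\<lambda>k. Inv k x) ` K" using cov x by force
    qed
    then show "card ((\<lambda>k. Inv k x) ` K) = card K" using x cK by simp
  qed
  have eqk: "k = l" if H: "k \<in> K" "l \<in> K" "e \<in> Mf n (Inv k)" "e \<in> Mf n (Inv l)" for k l e
  proof -
    obtain v where v: "v < 2*n" "e = {v, Inv k v}" using H(3) unfolding Mf_def by auto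
    have "e = {v, Inv l v}" using Mf_mem[OF inv[OF H(2)] v(1) H(4)] v by auto
    then have "Inv k v = Inv l v" using v inv[OF H(1)] unfolding fpfi_def
      by (metis doubleton_eq_iff)
    then show ?thesis using injx[OF v(1)] H(1,2) unfolding inj_on_def by blast
  qed
  have ne: "{0, Inv k 0} \<in> Mf n (Inv k)" for k using n unfolding Mf_def by auto
  have injM: "inj_on (\<lambda>k. Mf n (Inv k)) K"
    unfolding inj_on_def using eqk ne by metis
  have U: "\<Union> ((\<lambda>k. Mf n (Inv k)) ` K) = K_edges n"
  proof
    show "\<Union> ((\<lambda>k. Mf n (Inv k)) ` K) \<subseteq> K_edges n"
      using one_factor_Mf[OF inv] unfolding one_factor_def by blast
    show "K_edges n \<subseteq> \<Union> ((\<lambda>k. Mf n (Inv k)) ` K)"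
    proof
      fix e assume "e \<in> K_edges n"
      then obtain x y where xy: "e = {x,y}" "x < 2*n" "y < 2*n" "x \<noteq> y" unfolding K_edges_def by auto
      then obtain k where "k \<in> K" "Inv k x = y" using cov by blast
      then show "e \<in> \<Union> ((\<lambda>k. Mf n (Inv k)) ` K)" using xy unfolding Mf_def by auto
    qed
  qed
  have D: "disjoint ((\<lambda>k. Mf n (Inv k)) ` K)"
    unfolding disjoint_def using eqk by blast
  have E: "{} \<notin> (\<lambda>k. Mf n (Inv k)) ` K" using ne by blast
  show ?thesis unfolding one_factorization_def partition_on_def
    using U D E injM one_factor_Mf[OF inv] card_image[OF injM] cK by auto
qed



definition nx :: "nat \<Rightarrow> nat \<Rightarrow> nat" where
  "nx n t = (if t = n - 1 then 0 else t + 1)"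

definition qpos :: "nat \<Rightarrow> nat \<Rightarrow> nat \<Rightarrow> nat option" where
  "qpos c n t = (if c = 1 then (if t = n-1 then None else if even t then Some (t+1) else Some (t-1))
    else if c = 2 then (if t = 0 then None else if odd t then Some (t+1) else Some (t-1))
    else (if t = n-1 then Some 0 else if t = 0 then Some (n-1) else None))"

definition q :: "nat \<Rightarrow> nat \<Rightarrow> nat \<Rightarrow> nat" where
  "q c n a = (case qpos c n (if a < n then a else a - n) of
      None \<Rightarrow> (if a < n then a + n else a - n)
    | Some t' \<Rightarrow> (if a < n then 0 else n) + t')"

lemma qpos_props:
  assumes "odd n" "n \<ge> 3" "c \<in> {1,2,3}" "t < n"
  shows "\<forall>t'. qpos c n t = Some t' \<longrightarrow> t' < n \<and> t' \<noteq> t \<and> qpos c n t' = Some t \<and> (t' = nx n t \<or> t = nx n t')"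
proof -
  have en: "even (n - 1)" using assms(1) by simp
  consider "c = 1" | "c = 2" | "c = 3" using assms(3) by auto
  then show ?thesis
  proof cases
    case 1
    show ?thesis
    proof (cases "t = n - 1")
      case True then show ?thesis using 1 by (simp add: qpos_def)
    next
      case False
      show ?thesis
      proof (cases "even t")
        case True
        have "t + 1 \<noteq> n - 1" using True en False by (metis even_plus_one_iff)
        moreover have "t + 1 < n" using False assms(4) by linarith
        ultimately show ?thesis using 1 True False by (auto simp: qpos_def nx_def)
      next
        case od: False
        have "t \<noteq> 0" using od odd_pos by fastforce
        then have "t - 1 \<noteq> n - 1" "even (t - 1)" using od assms(4) by auto
        then show ?thesis using 1 od False assms(4) \<open>t \<noteq> 0\<close> by (auto simp: qpos_def nx_def)
      qed
    qed
  next
    case 2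
    show ?thesis
    proof (cases "t = 0")
      case True then show ?thesis using 2 by (simp add: qpos_def)
    next
      case False
      show ?thesis
      proof (cases "odd t")
        case True
        have "t \<noteq> n - 1" using True en by auto
        then have "t + 1 < n" "even (t+1)" "t + 1 \<noteq> 0" using True assms(4) by auto
        then show ?thesis using 2 True False \<open>t \<noteq> n - 1\<close> by (auto simp: qpos_def nx_def)
      next
        case ev: False
        have "t \<noteq> 1" using ev by auto
        then have "odd (t - 1)" "t - 1 \<noteq> 0" "t - 1 \<noteq> n - 1" using ev False assms(4) by auto
        then show ?thesis using 2 ev False assms(4) by (auto simp: qpos_def nx_def)
      qed
    qed
  next
    case 3
    have "n - 1 \<noteq> 0" using assms(2) by auto
    then show ?thesis using 3 assms(2,4) by (auto simp: qpos_def nx_def)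
  qed
qed

lemma q_A_none: "a < n \<Longrightarrow> qpos c n a = None \<Longrightarrow> q c n a = a + n"
  unfolding q_def by simp
lemma q_A_some: "a < n \<Longrightarrow> qpos c n a = Some t' \<Longrightarrow> q c n a = t'"
  unfolding q_def by simp
lemma q_B_none: "\<not> a < n \<Longrightarrow> qpos c n (a - n) = None \<Longrightarrow> q c n a = a - n"
  unfolding q_def by simp
lemma q_B_some: "\<not> a < n \<Longrightarrow> qpos c n (a - n) = Some t' \<Longrightarrow> q c n a = n + t'"
  unfolding q_def by simp

lemma q_fpfi:
  assumes "odd n" "n \<ge> 3" "c \<in> {1,2,3}"
  shows "fpfi n (q c n)"
  unfolding fpfi_def
proof (intro allI impI)
  fix a assume a: "a < 2*n"
  show "q c n a < 2 * n \<and> q c n a \<noteq> a \<and> q c n (q c n a) = a"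
  proof (cases "a < n")
    case True
    show ?thesis
    proof (cases "qpos c n a")
      case None
      have 1: "q c n a = a + n" using q_A_none[OF True None] .
      have "q c n (a + n) = a" using q_B_none[of "a+n" n c] None by simp
      then show ?thesis using 1 True by simp
    next
      case (Some t')
      have P: "t' < n" "t' \<noteq> a" "qpos c n t' = Some a" using Some True qpos_props[OF assms, of a] by auto
      have 1: "q c n a = t'" using q_A_some[OF True Some] .
      have "q c n t' = a" using q_A_some[OF P(1) P(3)] .
      then show ?thesis using 1 P by simp
    qed
  next
    case False
    have an: "a - n < n" using a False by simp
    show ?thesis
    proof (cases "qpos c n (a - n)")
      case None
      have 1: "q c n a = a - n" using q_B_none[OF False None] .
      have "q c n (a - n) = a - n + n" using q_A_none[OF an None] .
      then show ?thesis using 1 False a assms(2) by (simp, arith)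
    next
      case (Some t')
      have P: "t' < n" "t' \<noteq> a - n" "qpos c n t' = Some (a - n)" using Some an qpos_props[OF assms an] by auto
      have 1: "q c n a = n + t'" using q_B_some[OF False Some] .
      have "q c n (n + t') = n + (a - n)" using q_B_some[of "n + t'" n c "a - n"] P by simp
      then show ?thesis using 1 P False a by simp
    qed
  qed
qed

lemma q_adj:
  assumes "odd n" "n \<ge> 3" "c \<in> {1,2,3}" "a < 2*n"
  defines "b \<equiv> q c n a"
  shows "(a < n \<and> b < n \<and> (b = nx n a \<or> a = nx n b))
       \<or> (n \<le> a \<and> n \<le> b \<and> (b - n = nx n (a - n) \<or> a - n = nx n (b - n)))
       \<or> (a < n \<and> b = a + n) \<or> (n \<le> a \<and> a = b + n)"
proof (cases "a < n")
  case True
  show ?thesis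
  proof (cases "qpos c n a")
    case None then show ?thesis using q_A_none[OF True None] True unfolding b_def by simp
  next
    case (Some t')
    have P: "t' < n" "t' = nx n a \<or> a = nx n t'" using Some True qpos_props[OF assms(1-3), of a] by auto
    then show ?thesis using q_A_some[OF True Some] True unfolding b_def by simp
  qed
next
  case False
  have an: "a - n < n" using assms(4) False by simp
  show ?thesis
  proof (cases "qpos c n (a - n)")
    case None then show ?thesis using q_B_none[OF False None] False unfolding b_def by simp
  next
    case (Some t')
    have P: "t' < n" "t' = nx n (a - n) \<or> a - n = nx n t'" using Some qpos_props[OF assms(1-3) an] by auto
    then show ?thesis using q_B_some[OF False Some] False unfolding b_def by simp
  qed
qed

lemma q_cov:
  assumes "odd n" "n \<ge> 3" "t < n"
  shows "\<exists>c\<in>{1,2,3}. qpos c n t = Some (nx n t)"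
    and "\<exists>c\<in>{1,2,3}. qpos c n t = None"
proof -
  have en: "even (n - 1)" using assms(1) by simp
  show "\<exists>c\<in>{1,2,3}. qpos c n t = Some (nx n t)"
  proof (cases "t = n - 1")
    case True then show ?thesis using assms by (intro bexI[of _ 3]) (auto simp: qpos_def nx_def)
  next
    case False
    show ?thesis
    proof (cases "even t")
      case True then show ?thesis using assms False by (intro bexI[of _ 1]) (auto simp: qpos_def nx_def)
    next
      case odd: False
      have "t \<noteq> 0" using odd odd_pos by fastforce
      then show ?thesis using odd False by (intro bexI[of _ 2]) (auto simp: qpos_def nx_def)
    qed
  qed
  show "\<exists>c\<in>{1,2,3}. qpos c n t = None"
  proof (cases "t = n - 1")
    case True then show ?thesis by (intro bexI[of _ 1]) (auto simp: qpos_def)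
  next
    case False
    show ?thesis
    proof (cases "t = 0")
      case True then show ?thesis by (intro bexI[of _ 2]) (auto simp: qpos_def)
    next
      case nz: False then show ?thesis using False by (intro bexI[of _ 3]) (auto simp: qpos_def)
    qed
  qed
qed

lemma q_cov':
  assumes "odd n" "n \<ge> 3" "t < n"
  shows "\<exists>c\<in>{1,2,3}. q c n t = nx n t"
    and "\<exists>c\<in>{1,2,3}. q c n (n + t) = n + nx n t"
    and "\<exists>c\<in>{1,2,3}. q c n t = n + t"
proof -
  obtain c where c: "c \<in> {1,2,3}" "qpos c n t = Some (nx n t)" using q_cov(1)[OF assms] by blast
  then show "\<exists>c\<in>{1,2,3}. q c n t = nx n t" using q_A_some[OF assms(3) c(2)] by blast
  have "q c n (n + t) = n + nx n t" using q_B_some[of "n+t" n c "nx n t"] c by simp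
  then show "\<exists>c\<in>{1,2,3}. q c n (n + t) = n + nx n t" using c by blast
  obtain c where c: "c \<in> {1,2,3}" "qpos c n t = None" using q_cov(2)[OF assms] by blast
  then show "\<exists>c\<in>{1,2,3}. q c n t = n + t" using q_A_none[OF assms(3) c(2)] by (simp add: add.commute) blast
qed



definition r :: "nat \<Rightarrow> int \<Rightarrow> nat" where "r n z = nat (z mod int n)"

lemma r_int: "n > 0 \<Longrightarrow> int (r n z) = z mod int n"
  unfolding r_def by simp

lemma r_lt: "n > 0 \<Longrightarrow> r n z < n"
  unfolding r_def by (simp add: nat_less_iff)

lemma r_cong: "n > 0 \<Longrightarrow> [int (r n z) = z] (mod int n)"
  by (simp add: r_int)

lemma r_eq: "n > 0 \<Longrightarrow> [z = int v] (mod int n) \<Longrightarrow> v < n \<Longrightarrow> r n z = v"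
  unfolding r_def cong_def by simp

definition sg :: "nat \<Rightarrow> nat \<Rightarrow> nat \<Rightarrow> nat" where
  "sg n i a = (if a < n then r n (int a * int i) else n + r n (int i - 1 - int (a - n) * int i))"

definition tu :: "nat \<Rightarrow> nat \<Rightarrow> int \<Rightarrow> nat \<Rightarrow> nat" where
  "tu n i u v = (if v < n then r n (int v * u) else n + r n ((int i - 1 - int (v - n)) * u))"

locale ctx =
  fixes n i :: nat and u :: int
  assumes odd: "odd n" and n3: "n \<ge> 3" and i1: "1 \<le> i" and iN: "i < n"
    and inv: "[int i * u = 1] (mod int n)"
begin

lemma npos: "n > 0" using n3 by simp

lemma sg_A: "a < n \<Longrightarrow> sg n i a < n" unfolding sg_def using r_lt npos by simp
lemma sg_B: "\<not> a < n \<Longrightarrow> sg n i a \<ge> n" unfolding sg_def by simp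
lemma sg_lt: "a < 2*n \<Longrightarrow> sg n i a < 2*n" unfolding sg_def using r_lt[OF npos] by (auto simp: mult_2 intro: trans_less_add1)
lemma tu_A: "v < n \<Longrightarrow> tu n i u v < n" unfolding tu_def using r_lt npos by simp
lemma tu_B: "\<not> v < n \<Longrightarrow> tu n i u v \<ge> n" unfolding tu_def by simp
lemma tu_lt: "v < 2*n \<Longrightarrow> tu n i u v < 2*n" unfolding tu_def using r_lt[OF npos] by (auto simp: mult_2 intro: trans_less_add1)

lemma tu_sg: assumes "a < 2*n" shows "tu n i u (sg n i a) = a"
proof (cases "a < n")
  case True
  have s: "sg n i a = r n (int a * int i)" "sg n i a < n" using True sg_A unfolding sg_def by auto
  have "[int (r n (int a * int i)) * u = int a * int i * u] (mod int n)"
    by (rule cong_scalar_right[OF r_cong[OF npos]])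
  also have "[int a * int i * u = int a * 1] (mod int n)"
    unfolding mult.assoc by (rule cong_scalar_left[OF inv])
  finally have "r n (int (sg n i a) * u) = a" using s True by (intro r_eq[OF npos]) auto
  then show ?thesis using s unfolding tu_def by simp
next
  case False
  let ?z = "int i - 1 - int (a - n) * int i"
  have s: "sg n i a = n + r n ?z" "\<not> sg n i a < n" using False unfolding sg_def by auto
  have e: "int i - 1 - int (sg n i a - n) = int i - 1 - int (r n ?z)" using s by simp
  have "[(int i - 1 - int (r n ?z)) * u = (int i - 1 - ?z) * u] (mod int n)"
    by (intro cong_scalar_right cong_diff cong_refl r_cong[OF npos])
  also have "(int i - 1 - ?z) * u = int (a - n) * (int i * u)" by (simp add: algebra_simps)
  also have "[int (a - n) * (int i * u) = int (a - n) * 1] (mod int n)" by (rule cong_scalar_left[OF inv])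
  finally have "r n ((int i - 1 - int (sg n i a - n)) * u) = a - n" using e False assms
    by (intro r_eq[OF npos]) auto
  then show ?thesis using s False unfolding tu_def by simp
qed

lemma sg_tu: assumes "v < 2*n" shows "sg n i (tu n i u v) = v"
proof (cases "v < n")
  case True
  have s: "tu n i u v = r n (int v * u)" "tu n i u v < n" using True tu_A unfolding tu_def by auto
  have "[int (r n (int v * u)) * int i = int v * u * int i] (mod int n)"
    by (rule cong_scalar_right[OF r_cong[OF npos]])
  also have "int v * u * int i = int v * (int i * u)" by (simp add: algebra_simps)
  also have "[int v * (int i * u) = int v * 1] (mod int n)"
    by (rule cong_scalar_left[OF inv])
  finally have "r n (int (tu n i u v) * int i) = v" using s True by (intro r_eq[OF npos]) auto
  then show ?thesis using s unfolding sg_def by simp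
next
  case False
  let ?z = "(int i - 1 - int (v - n)) * u"
  have s: "tu n i u v = n + r n ?z" "\<not> tu n i u v < n" using False unfolding tu_def by auto
  have e: "int (tu n i u v - n) = int (r n ?z)" using s by simp
  have "[int i - 1 - int (r n ?z) * int i = int i - 1 - ?z * int i] (mod int n)"
    by (intro cong_diff cong_refl cong_scalar_right r_cong[OF npos])
  also have "int i - 1 - ?z * int i = int i - 1 - (int i - 1 - int (v - n)) * (int i * u)" by (simp add: algebra_simps)
  also have "[int i - 1 - (int i - 1 - int (v - n)) * (int i * u) = int i - 1 - (int i - 1 - int (v - n)) * 1] (mod int n)"
    by (intro cong_diff cong_refl cong_scalar_left inv)
  also have "int i - 1 - (int i - 1 - int (v - n)) * 1 = int (v - n)" by simp
  finally have "r n (int i - 1 - int (tu n i u v - n) * int i) = v - n" using e False assms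
    by (intro r_eq[OF npos]) auto
  then show ?thesis using s False unfolding sg_def by simp
qed

end


context ctx begin

lemma nx_lt: "t < n \<Longrightarrow> nx n t < n" unfolding nx_def using npos by auto

lemma nx_cong: "t < n \<Longrightarrow> [int (nx n t) = int t + 1] (mod int n)"
  unfolding nx_def using npos by (auto simp: cong_def of_nat_diff)

lemma sgA_cong: "t < n \<Longrightarrow> [int (sg n i t) = int t * int i] (mod int n)"
  unfolding sg_def using r_cong[OF npos] by simp

lemma sgB_cong: "t < n \<Longrightarrow> [int (sg n i (n + t)) - int n = int i - 1 - int t * int i] (mod int n)"
  unfolding sg_def using r_cong[OF npos] by simp

lemma sgB_ge: "t < n \<Longrightarrow> n \<le> sg n i (n + t) \<and> sg n i (n + t) \<le> 2*n - 1"
  using sg_lt[of "n+t"] sg_B[of "n+t"] by auto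

lemma E1: assumes "t < n" shows "{sg n i t, sg n i (nx n t)} \<in> A_set n i"
proof -
  have "[int (sg n i (nx n t)) - int (sg n i t) = (int t + 1) * int i - int t * int i] (mod int n)"
    by (intro cong_diff cong_trans[OF sgA_cong[OF nx_lt[OF assms]]] cong_scalar_right nx_cong assms sgA_cong)
  then have "[int (sg n i (nx n t)) - int (sg n i t) = int i] (mod int n)" by (simp add: algebra_simps)
  moreover have "sg n i t \<le> n - 1" "sg n i (nx n t) \<le> n - 1"
    using sg_A[OF assms] sg_A[OF nx_lt[OF assms]] by auto
  ultimately show ?thesis unfolding A_set_def by blast
qed

lemma E2: assumes "t < n" shows "{sg n i (n + t), sg n i (n + nx n t)} \<in> B_set n i"
proof -
  have "[(int (sg n i (n + t)) - int n) - (int (sg n i (n + nx n t)) - int n)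
        = (int i - 1 - int t * int i) - (int i - 1 - (int t + 1) * int i)] (mod int n)"
    by (intro cong_diff cong_refl cong_scalar_right nx_cong assms sgB_cong
          cong_trans[OF sgB_cong[OF nx_lt[OF assms]]])
  then have "[int (sg n i (n + t)) - int (sg n i (n + nx n t)) = int i] (mod int n)" by (simp add: algebra_simps)
  moreover note sgB_ge[OF assms] sgB_ge[OF nx_lt[OF assms]]
  ultimately show ?thesis unfolding B_set_def by (smt (verit) insert_commute mem_Collect_eq)
qed

lemma E3: assumes "t < n" shows "{sg n i t, sg n i (n + t)} \<in> C_set n (i - 1)"
proof -
  have "[int (sg n i t) + (int (sg n i (n + t)) - int n) = int t * int i + (int i - 1 - int t * int i)] (mod int n)"
    by (intro cong_add sgA_cong sgB_cong assms)
  then have "[int (sg n i t) + int (sg n i (n + t)) = int (i - 1)] (mod int n)"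
    using i1 by (simp add: cong_def algebra_simps of_nat_diff)
  then have "[sg n i t + sg n i (n + t) = i - 1] (mod n)" by (metis cong_int_iff of_nat_add)
  moreover note sgB_ge[OF assms]
  moreover have "sg n i t \<le> n - 1" using sg_A[OF assms] by auto
  ultimately show ?thesis unfolding C_set_def by blast
qed

lemma uniq: "x < n \<Longrightarrow> y < n \<Longrightarrow> [int x = int y] (mod int n) \<Longrightarrow> x = y"
  using cong_less_imp_eq_int[of "int x" "int n" "int y"] by simp

lemma E1': assumes "e \<in> A_set n i" shows "\<exists>t<n. e = {sg n i t, sg n i (nx n t)}"
proof -
  obtain x y where xy: "e = {x, y}" "x \<le> n - 1" "y \<le> n - 1" "[int y - int x = int i] (mod int n)"
    using assms unfolding A_set_def by blast
  have x: "x < n" "y < n" using xy npos by auto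
  define t where "t = tu n i u x"
  have t: "t < n" "sg n i t = x" using tu_A[OF x(1)] sg_tu[of x] x unfolding t_def by auto
  have "[int (sg n i (nx n t)) = (int t + 1) * int i] (mod int n)"
    by (intro cong_trans[OF sgA_cong[OF nx_lt[OF t(1)]]] cong_scalar_right nx_cong t)
  also have "(int t + 1) * int i = int t * int i + int i" by (simp add: algebra_simps)
  also have "[int t * int i + int i = int x + (int y - int x)] (mod int n)"
    using sgA_cong[OF t(1)] t(2) xy(4) by (intro cong_add) (auto simp: cong_sym)
  finally have "sg n i (nx n t) = y" using x by (intro uniq sg_A nx_lt t) auto
  then show ?thesis using t xy by blast
qed

lemma E2': assumes "e \<in> B_set n i" shows "\<exists>t<n. e = {sg n i (n + t), sg n i (n + nx n t)}"
proof -
  obtain x y where xy: "e = {x, y}" "n \<le> x" "x \<le> 2*n - 1" "n \<le> y" "y \<le> 2*n - 1"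
      "[int y - int x = int i] (mod int n)"
    using assms unfolding B_set_def by blast
  have y: "y < 2*n" "\<not> y < n" "x < 2*n" "\<not> x < n" using xy npos by auto
  define t where "t = tu n i u y - n"
  have t: "t < n" "sg n i (n + t) = y" using tu_B[OF y(2)] tu_lt[OF y(1)] sg_tu[OF y(1)] unfolding t_def by auto
  have "[int (sg n i (n + nx n t)) - int n = int i - 1 - (int t + 1) * int i] (mod int n)"
    by (intro cong_trans[OF sgB_cong[OF nx_lt[OF t(1)]]] cong_diff cong_refl cong_scalar_right nx_cong t)
  also have "int i - 1 - (int t + 1) * int i = (int i - 1 - int t * int i) - int i" by (simp add: algebra_simps)
  also have "[(int i - 1 - int t * int i) - int i = (int y - int n) - (int y - int x)] (mod int n)"
  proof (rule cong_diff)
    show "[int i - 1 - int t * int i = int y - int n] (mod int n)" using sgB_cong[OF t(1)] t(2) by (simp add: cong_sym)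
    show "[int i = int y - int x] (mod int n)" using xy(6) by (simp add: cong_sym)
  qed
  finally have "[int (sg n i (n + nx n t) - n) = int (x - n)] (mod int n)"
    using sgB_ge[OF nx_lt[OF t(1)]] xy(2) by (simp add: of_nat_diff)
  then have "sg n i (n + nx n t) - n = x - n" using sgB_ge[OF nx_lt[OF t(1)]] y npos
    by (intro uniq) auto
  then have "sg n i (n + nx n t) = x" using sgB_ge[OF nx_lt[OF t(1)]] xy(2) by arith
  then show ?thesis using t xy by blast
qed

lemma E3': assumes "e \<in> C_set n (i - 1)" shows "\<exists>t<n. e = {sg n i t, sg n i (n + t)}"
proof -
  obtain x y where xy: "e = {x, y}" "x \<le> n - 1" "n \<le> y" "y \<le> 2*n - 1" "[x + y = i - 1] (mod n)"
    using assms unfolding C_set_def by blast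
  have x: "x < n" "y < 2*n" using xy npos by auto
  have c: "[int x + int y = int i - 1] (mod int n)" using xy(5) i1
    by (metis cong_int_iff of_nat_add of_nat_diff of_nat_1)
  define t where "t = tu n i u x"
  have t: "t < n" "sg n i t = x" using tu_A[OF x(1)] sg_tu[of x] x unfolding t_def by auto
  have "[int (sg n i (n + t)) - int n = int i - 1 - int t * int i] (mod int n)" by (rule sgB_cong[OF t(1)])
  also have "[int i - 1 - int t * int i = (int x + int y) - int x] (mod int n)"
    using sgA_cong[OF t(1)] t(2) c by (intro cong_diff) (auto simp: cong_sym)
  also have "(int x + int y) - int x = int (y - n) + int n" using xy(3) by simp
  also have "[int (y - n) + int n = int (y - n)] (mod int n)" by (simp add: cong_def)
  finally have "[int (sg n i (n + t) - n) = int (y - n)] (mod int n)" using sgB_ge[OF t(1)] by (simp add: of_nat_diff)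
  then have "sg n i (n + t) - n = y - n" using sgB_ge[OF t(1)] x npos by (intro uniq) auto
  then have "sg n i (n + t) = y" using sgB_ge[OF t(1)] xy(3) by arith
  then show ?thesis using t xy by blast
qed

end


definition Pc :: "nat \<Rightarrow> nat \<Rightarrow> int \<Rightarrow> nat \<Rightarrow> nat \<Rightarrow> nat" where
  "Pc n i u c = (\<lambda>v. sg n i (q c n (tu n i u v)))"

context ctx begin

lemma Pc_fpfi: assumes c: "c \<in> {1,2,3}" shows "fpfi n (Pc n i u c)"
  unfolding fpfi_def Pc_def
proof (intro allI impI)
  fix v assume v: "v < 2*n"
  define a where "a = tu n i u v"
  have a: "a < 2*n" "sg n i a = v" using tu_lt[OF v] sg_tu[OF v] unfolding a_def by auto
  have Q: "q c n a < 2*n" "q c n a \<noteq> a" "q c n (q c n a) = a"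
    using q_fpfi[OF odd n3 c] a(1) unfolding fpfi_def by auto
  have "sg n i (q c n a) \<noteq> v"
  proof
    assume "sg n i (q c n a) = v"
    then have "tu n i u (sg n i (q c n a)) = tu n i u (sg n i a)" using a by simp
    then show False using tu_sg[OF Q(1)] tu_sg[OF a(1)] Q(2) by simp
  qed
  then show "sg n i (q c n (tu n i u v)) < 2 * n \<and> sg n i (q c n (tu n i u v)) \<noteq> v \<and>
         sg n i (q c n (tu n i u (sg n i (q c n (tu n i u v))))) = v"
    using sg_lt[OF Q(1)] tu_sg[OF Q(1)] Q(3) a unfolding a_def[symmetric] by simp
qed

lemma Mf_Pc: "Mf n (Pc n i u c) = {{sg n i a, sg n i (q c n a)} | a. a < 2*n}"
  unfolding Mf_def Pc_def
proof (intro equalityI subsetI)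
  fix e assume "e \<in> {{v, sg n i (q c n (tu n i u v))} |v. v < 2 * n}"
  then obtain v where v: "v < 2*n" "e = {v, sg n i (q c n (tu n i u v))}" by blast
  then show "e \<in> {{sg n i a, sg n i (q c n a)} |a. a < 2 * n}"
    using tu_lt[OF v(1)] sg_tu[OF v(1)] by (metis (mono_tags, lifting) mem_Collect_eq)
next
  fix e assume "e \<in> {{sg n i a, sg n i (q c n a)} |a. a < 2 * n}"
  then obtain a where a: "a < 2*n" "e = {sg n i a, sg n i (q c n a)}" by blast
  then show "e \<in> {{v, sg n i (q c n (tu n i u v))} |v. v < 2 * n}"
    using sg_lt[OF a(1)] tu_sg[OF a(1)] by (metis (mono_tags, lifting) mem_Collect_eq)
qed

lemma union3: "Mf n (Pc n i u 1) \<union> Mf n (Pc n i u 2) \<union> Mf n (Pc n i u 3)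
   = A_set n i \<union> B_set n i \<union> C_set n (i - 1)"
proof (intro equalityI subsetI)
  fix e assume "e \<in> Mf n (Pc n i u 1) \<union> Mf n (Pc n i u 2) \<union> Mf n (Pc n i u 3)"
  then obtain c a where ca: "c \<in> {1,2,3}" "a < 2*n" "e = {sg n i a, sg n i (q c n a)}"
    unfolding Mf_Pc by blast
  define b where "b = q c n a"
  have b: "b < 2*n" using q_fpfi[OF odd n3 ca(1)] ca(2) unfolding fpfi_def b_def by auto
  have e: "e = {sg n i a, sg n i b}" using ca b_def by simp
  from q_adj[OF odd n3 ca(1) ca(2)]
  consider "a < n" "b < n" "b = nx n a" | "a < n" "b < n" "a = nx n b"
    | "n \<le> a" "n \<le> b" "b - n = nx n (a - n)" | "n \<le> a" "n \<le> b" "a - n = nx n (b - n)"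
    | "a < n" "b = a + n" | "n \<le> a" "a = b + n"
    unfolding b_def by blast
  then show "e \<in> A_set n i \<union> B_set n i \<union> C_set n (i - 1)"
  proof cases
    case 1 then show ?thesis using E1[of a] e by simp
  next
    case 2 then show ?thesis using E1[of b] e by (simp add: insert_commute)
  next
    case 3
    have "a - n < n" using ca(2) by simp
    moreover have "n + nx n (a - n) = b" "n + (a - n) = a" using 3 by arith+
    ultimately show ?thesis using E2[of "a - n"] e by simp
  next
    case 4
    have "b - n < n" using b by simp
    moreover have "n + nx n (b - n) = a" "n + (b - n) = b" using 4 by arith+
    ultimately show ?thesis using E2[of "b - n"] e by (simp add: insert_commute)
  next
    case 5 then show ?thesis using E3[of a] e by (simp add: add.commute)
  next
    case 6
    have "b < n" using 6 ca(2) by simp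
    then show ?thesis using E3[of b] e 6 by (simp add: add.commute insert_commute)
  qed
next
  fix e assume "e \<in> A_set n i \<union> B_set n i \<union> C_set n (i - 1)"
  then have "\<exists>c\<in>{1,2,3}. \<exists>a<2*n. e = {sg n i a, sg n i (q c n a)}"
  proof (elim UnE)
    assume "e \<in> A_set n i"
    then obtain t where t: "t < n" "e = {sg n i t, sg n i (nx n t)}" using E1' by blast
    then obtain c where "c \<in> {1,2,3}" "q c n t = nx n t" using q_cov'(1)[OF odd n3 t(1)] by blast
    then show ?thesis using t by (intro bexI[of _ c] exI[of _ t]) auto
  next
    assume "e \<in> B_set n i"
    then obtain t where t: "t < n" "e = {sg n i (n + t), sg n i (n + nx n t)}" using E2' by blast
    then obtain c where "c \<in> {1,2,3}" "q c n (n + t) = n + nx n t" using q_cov'(2)[OF odd n3 t(1)] by blast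
    then show ?thesis using t by (intro bexI[of _ c] exI[of _ "n + t"]) auto
  next
    assume "e \<in> C_set n (i - 1)"
    then obtain t where t: "t < n" "e = {sg n i t, sg n i (n + t)}" using E3' by blast
    then obtain c where "c \<in> {1,2,3}" "q c n t = n + t" using q_cov'(3)[OF odd n3 t(1)] by blast
    then show ?thesis using t by (intro bexI[of _ c] exI[of _ t]) auto
  qed
  then show "e \<in> Mf n (Pc n i u 1) \<union> Mf n (Pc n i u 2) \<union> Mf n (Pc n i u 3)"
    unfolding Mf_Pc by blast
qed

end


definition U :: "nat \<Rightarrow> nat \<Rightarrow> int" where
  "U n i = (SOME u. [int i * u = 1] (mod int n))"

lemma ctx_inst:
  assumes "prime n" "n mod 6 = 1 \<or> n mod 6 = 5" "1 \<le> i" "i < n"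
  shows "ctx n i (U n i)"
proof -
  have "\<not> n dvd i" using assms(3,4) by (auto dest: dvd_imp_le)
  then have "coprime n i" using prime_imp_coprime[OF assms(1)] by blast
  then have "coprime (int i) (int n)" by (simp add: coprime_commute)
  then have "\<exists>u. [int i * u = 1] (mod int n)" by (rule cong_solve_coprime_int)
  then have "[int i * U n i = 1] (mod int n)" unfolding U_def by (rule someI_ex)
  moreover have "odd n" using assms(2) by presburger
  moreover have "n \<ge> 3" using prime_ge_2_nat[OF assms(1)] assms(2) by presburger
  ultimately show ?thesis using assms by unfold_locales auto
qed

definition cinv :: "nat \<Rightarrow> nat \<Rightarrow> nat \<Rightarrow> nat" where
  "cinv n j v = (if v < n then n + r n (int j - int v) else r n (int j - int (v - n)))"

lemma cinv_fpfi: assumes n: "n > 0" shows "fpfi n (cinv n j)"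
  unfolding fpfi_def
proof (intro allI impI)
  fix v assume v: "v < 2*n"
  show "cinv n j v < 2 * n \<and> cinv n j v \<noteq> v \<and> cinv n j (cinv n j v) = v"
  proof (cases "v < n")
    case True
    let ?w = "r n (int j - int v)"
    have w: "?w < n" using r_lt[OF n] .
    have "[int j - int ?w = int j - (int j - int v)] (mod int n)"
      by (intro cong_diff cong_refl r_cong[OF n])
    then have "[int j - int (n + ?w - n) = int j - (int j - int v)] (mod int n)" by simp
    then have "r n (int j - int (n + ?w - n)) = v" using True by (intro r_eq[OF n]) auto
    then show ?thesis using True w unfolding cinv_def by auto
  next
    case False
    let ?w = "r n (int j - int (v - n))"
    have w: "?w < n" using r_lt[OF n] .
    have "[int j - int ?w = int j - (int j - int (v - n))] (mod int n)"
      by (intro cong_diff cong_refl r_cong[OF n])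
    then have "r n (int j - int ?w) = v - n" using False v by (intro r_eq[OF n]) auto
    then show ?thesis using False w v unfolding cinv_def by auto
  qed
qed

lemma Mf_cinv: assumes n: "n > 0" shows "Mf n (cinv n j) = C_set n j"
proof (intro equalityI subsetI)
  fix e assume "e \<in> Mf n (cinv n j)"
  then obtain v where v: "v < 2*n" "e = {v, cinv n j v}" unfolding Mf_def by auto
  show "e \<in> C_set n j"
  proof (cases "v < n")
    case True
    let ?w = "r n (int j - int v)"
    have "[int v + (int n + int ?w) = int v + (int n + (int j - int v))] (mod int n)"
      by (intro cong_add cong_refl r_cong[OF n])
    then have "[int v + int (n + ?w) = int v + int n + (int j - int v)] (mod int n)" by (simp add: add.assoc)
    also have "int v + int n + (int j - int v) = int j + int n" by simp
    also have "[int j + int n = int j] (mod int n)" by (simp add: cong_def)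
    finally have "[v + (n + ?w) = j] (mod n)" by (metis cong_int_iff of_nat_add)
    moreover have "?w < n" using r_lt[OF n] .
    ultimately have "{v, n + ?w} \<in> C_set n j" using True unfolding C_set_def
      by (intro CollectI exI[of _ v] exI[of _ "n + ?w"]) auto
    then show ?thesis using True v unfolding cinv_def by simp
  next
    case False
    let ?w = "r n (int j - int (v - n))"
    have "[int ?w + int v = (int j - int (v - n)) + int v] (mod int n)"
      by (intro cong_add cong_refl r_cong[OF n])
    also have "(int j - int (v - n)) + int v = int j + int n" using False by (simp add: of_nat_diff)
    also have "[int j + int n = int j] (mod int n)" by (simp add: cong_def)
    finally have "[?w + v = j] (mod n)" by (metis cong_int_iff of_nat_add)
    moreover have "?w < n" using r_lt[OF n] .
    ultimately have "{?w, v} \<in> C_set n j" using False v unfolding C_set_def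
      by (intro CollectI exI[of _ ?w] exI[of _ v]) auto
    then show ?thesis using False v unfolding cinv_def by (simp add: insert_commute)
  qed
next
  fix e assume "e \<in> C_set n j"
  then obtain x y where xy: "e = {x, y}" "x \<le> n - 1" "n \<le> y" "y \<le> 2*n - 1" "[x + y = j] (mod n)"
    unfolding C_set_def by blast
  have x: "x < n" using xy n by auto
  have c: "[int x + int y = int j] (mod int n)" using xy(5) by (metis cong_int_iff of_nat_add)
  have "[int j - int x = (int x + int y) - int x] (mod int n)" by (intro cong_diff cong_refl) (simp add: c cong_sym)
  also have "(int x + int y) - int x = int (y - n) + int n" using xy(3) by simp
  also have "[int (y - n) + int n = int (y - n)] (mod int n)" by (simp add: cong_def)
  finally have "r n (int j - int x) = y - n" using xy n by (intro r_eq[OF n]) auto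
  then have "cinv n j x = y" using x xy(3) unfolding cinv_def by simp
  then show "e \<in> Mf n (cinv n j)" using xy(1) x n unfolding Mf_def by auto
qed

lemma Mf_hit: "fpfi n p \<Longrightarrow> x < 2*n \<Longrightarrow> x \<noteq> y \<Longrightarrow> {x, y} \<in> Mf n p \<Longrightarrow> p x = y"
  using Mf_mem[of n p x "{x,y}"] by (auto simp: doubleton_eq_iff)



definition Inv :: "nat \<Rightarrow> nat \<times> nat \<Rightarrow> nat \<Rightarrow> nat" where
  "Inv n k = (if fst k = 0 then cinv n (snd k) else Pc n (fst k) (U n (fst k)) (snd k))"

definition KK :: "nat \<Rightarrow> (nat \<times> nat) set" where
  "KK n = ({1..(n-1) div 2} \<times> {1..3}) \<union> ({0} \<times> {(n-1) div 2..n-1})"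

locale setting =
  fixes n :: nat
  assumes pr: "prime n" and md: "n mod 6 = 1 \<or> n mod 6 = 5"
begin

lemma n3: "n \<ge> 3" using prime_ge_2_nat[OF pr] md by presburger
lemma npos: "n > 0" using n3 by simp
lemma oddn: "odd n" using md by presburger

lemma ctxd: "1 \<le> d \<Longrightarrow> d \<le> (n-1) div 2 \<Longrightarrow> ctx n d (U n d)"
  by (rule ctx_inst[OF pr md]) (use n3 in auto)

lemma Inv_fpfi: assumes "k \<in> KK n" shows "fpfi n (Inv n k)"
proof (cases "fst k = 0")
  case True then show ?thesis using cinv_fpfi[OF npos] unfolding Inv_def by simp
next
  case False
  then obtain d c where k: "k = (d, c)" "1 \<le> d" "d \<le> (n-1) div 2" "1 \<le> c" "c \<le> 3"
    using assms unfolding KK_def by auto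
  then have "c \<in> {1,2,3}" by auto
  then show ?thesis using ctx.Pc_fpfi[OF ctxd[OF k(2,3)]] k unfolding Inv_def by simp
qed

lemma Kcard: "card (KK n) = 2*n - 1"
proof -
  have d: "({1..(n-1) div 2} \<times> {1..3::nat}) \<inter> ({0} \<times> {(n-1) div 2..n-1}) = {}" by auto
  have "card (KK n) = card ({1..(n-1) div 2} \<times> {1..3::nat}) + card ({0::nat} \<times> {(n-1) div 2..n-1})"
    unfolding KK_def by (rule card_Un_disjoint[OF _ _ d]) auto
  also have "\<dots> = (n-1) div 2 * 3 + (n - (n-1) div 2)" using npos by (simp add: card_cartesian_product)
  also have "\<dots> = 2*n - 1"
  proof -
    obtain t where t: "n = 2*t + 1" using oddn by (metis oddE)
    then have "(n-1) div 2 = t" by simp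
    then show ?thesis using t by simp
  qed
  finally show ?thesis .
qed

lemma cover_d: assumes "1 \<le> d" "d \<le> (n-1) div 2" "e \<in> A_set n d \<union> B_set n d \<union> C_set n (d - 1)"
  shows "\<exists>k\<in>KK n. e \<in> Mf n (Inv n k)"
proof -
  have "e \<in> Mf n (Pc n d (U n d) 1) \<union> Mf n (Pc n d (U n d) 2) \<union> Mf n (Pc n d (U n d) 3)"
    using ctx.union3[OF ctxd[OF assms(1,2)]] assms(3) by simp
  then obtain c where "c \<in> {1,2,3}" "e \<in> Mf n (Pc n d (U n d) c)" by blast
  then show ?thesis using assms(1,2) unfolding KK_def Inv_def
    by (intro bexI[of _ "(d,c)"]) auto
qed

lemma cover_C: assumes "j < n" "e \<in> C_set n j" shows "\<exists>k\<in>KK n. e \<in> Mf n (Inv n k)"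
proof (cases "j < (n-1) div 2")
  case True then show ?thesis using cover_d[of "j+1" e] assms by auto
next
  case False
  then show ?thesis using assms Mf_cinv[OF npos] unfolding KK_def Inv_def
    by (intro bexI[of _ "(0,j)"]) auto
qed

lemma diff_class: assumes "x < n" "y < n" "x \<noteq> y"
  shows "\<exists>d. 1 \<le> d \<and> d \<le> (n-1) div 2 \<and>
     ([int y - int x = int d] (mod int n) \<or> [int x - int y = int d] (mod int n))"
proof -
  define d where "d = nat ((int y - int x) mod int n)"
  have dd: "int d = (int y - int x) mod int n" unfolding d_def using npos by simp
  have "(int y - int x) mod int n < int n" using npos by simp
  then have dn: "d < n" using dd by linarith
  have c1: "[int y - int x = int d] (mod int n)" using dd by (simp add: cong_def)
  have "d \<noteq> 0"
  proof
    assume "d = 0"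
    then have "[int y = int x] (mod int n)" using c1 by (simp add: cong_diff_iff_cong_0)
    then show False using assms cong_less_imp_eq_int[of "int y" "int n" "int x"] by simp
  qed
  show ?thesis
  proof (cases "d \<le> (n-1) div 2")
    case True then show ?thesis using c1 \<open>d \<noteq> 0\<close> by (intro exI[of _ d]) auto
  next
    case False
    have "[int x - int y = - int d] (mod int n)" using c1 by (metis cong_minus_minus_iff minus_diff_eq)
    also have "[- int d = - int d + int n] (mod int n)" by (simp add: cong_def)
    also have "- int d + int n = int (n - d)" using dn by simp
    finally have "[int x - int y = int (n - d)] (mod int n)" .
    moreover have "1 \<le> n - d" "n - d \<le> (n-1) div 2"
    proof -
      obtain t where t: "n = 2*t + 1" using oddn by (metis oddE)
      then have "(n-1) div 2 = t" by simp
      then show "1 \<le> n - d" "n - d \<le> (n-1) div 2" using t False dn by auto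
    qed
    ultimately show ?thesis by blast
  qed
qed

lemma cover: assumes "x < 2*n" "y < 2*n" "x \<noteq> y" shows "\<exists>k\<in>KK n. Inv n k x = y"
proof -
  have "\<exists>k\<in>KK n. {x,y} \<in> Mf n (Inv n k)"
  proof (cases "x < n")
    case xA: True
    show ?thesis
    proof (cases "y < n")
      case True
      then obtain d where d: "1 \<le> d" "d \<le> (n-1) div 2"
        "[int y - int x = int d] (mod int n) \<or> [int x - int y = int d] (mod int n)"
        using diff_class[OF xA _ assms(3)] by blast
      have "{x,y} \<in> A_set n d" using d(3)
      proof (elim disjE)
        assume "[int y - int x = int d] (mod int n)"
        then show ?thesis using xA True unfolding A_set_def
          by (intro CollectI exI[of _ x] exI[of _ y]) auto
      next
        assume "[int x - int y = int d] (mod int n)"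
        then have "{y,x} \<in> A_set n d" using xA True unfolding A_set_def
          by (intro CollectI exI[of _ y] exI[of _ x]) auto
        then show ?thesis by (simp add: insert_commute)
      qed
      then show ?thesis using cover_d[OF d(1,2)] by blast
    next
      case False
      have "{x,y} \<in> C_set n ((x+y) mod n)" using xA False assms unfolding C_set_def
        by (intro CollectI exI[of _ x] exI[of _ y]) (auto simp: cong_def)
      then show ?thesis using cover_C[OF mod_less_divisor[OF npos]] by blast
    qed
  next
    case xB: False
    show ?thesis
    proof (cases "y < n")
      case True
      have "{y,x} \<in> C_set n ((x+y) mod n)" using xB True assms unfolding C_set_def
        by (intro CollectI exI[of _ y] exI[of _ x]) (auto simp: cong_def add.commute)
      then show ?thesis using cover_C[OF mod_less_divisor[OF npos]] by (metis insert_commute)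
    next
      case False
      have x': "x - n < n" "y - n < n" "x - n \<noteq> y - n" using xB False assms by auto
      then obtain d where d: "1 \<le> d" "d \<le> (n-1) div 2"
        "[int (y-n) - int (x-n) = int d] (mod int n) \<or> [int (x-n) - int (y-n) = int d] (mod int n)"
        using diff_class by blast
      have e1: "int (y-n) - int (x-n) = int y - int x" "int (x-n) - int (y-n) = int x - int y"
        using xB False by (auto simp: of_nat_diff)
      have "{x,y} \<in> B_set n d" using d(3) unfolding e1
      proof (elim disjE)
        assume "[int y - int x = int d] (mod int n)"
        then show ?thesis using xB False assms unfolding B_set_def
          by (intro CollectI exI[of _ x] exI[of _ y]) auto
      next
        assume "[int x - int y = int d] (mod int n)"
        then have "{y,x} \<in> B_set n d" using xB False assms unfolding B_set_def
          by (intro CollectI exI[of _ y] exI[of _ x]) auto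
        then show ?thesis by (simp add: insert_commute)
      qed
      then show ?thesis using cover_d[OF d(1,2)] by blast
    qed
  qed
  then obtain k where "k \<in> KK n" "{x,y} \<in> Mf n (Inv n k)" by blast
  then show ?thesis using Mf_hit[OF Inv_fpfi assms(1,3)] by blast
qed

lemma oneF: "one_factorization n ((\<lambda>k. Mf n (Inv n k)) ` KK n)"
  using general[of "KK n" n "Inv n"] Kcard npos Inv_fpfi cover unfolding KK_def[symmetric]
  by (auto simp: KK_def)

end


context setting begin

lemma G_d: "1 \<le> d \<Longrightarrow> Mf n (Inv n (d, c)) = Mf n (Pc n d (U n d) c)" unfolding Inv_def by simp
lemma G_0: "Mf n (Inv n (0, j)) = C_set n j" unfolding Inv_def using Mf_cinv[OF npos] by simp

lemma case5:
  assumes m5: "n mod 6 = 5"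
  shows "\<exists>R :: nat \<Rightarrow> nat \<Rightarrow> nat set set.
         (\<lambda>k. Mf n (Inv n k)) ` KK n = {R i j | i j. 1 \<le> i \<and> i \<le> (2*n - 1) div 3 \<and> 1 \<le> j \<and> j \<le> 3}
       \<and> (\<forall>i. 1 \<le> i \<and> i \<le> (n - 1) div 2 \<longrightarrow>
              R i 1 \<union> R i 2 \<union> R i 3 = A_set n i \<union> B_set n i \<union> C_set n (i - 1))
       \<and> (\<forall>i. (n + 1) div 2 \<le> i \<and> i \<le> (2*n - 1) div 3 \<longrightarrow>
              R i 1 = C_set n (3*i - n - 2) \<and> R i 2 = C_set n (3*i - n - 1)
              \<and> R i 3 = C_set n (3*i - n))"
proof -
  define t where "t = n div 6"
  have t: "n = 6*t + 5" using m5 div_mult_mod_eq[of n 6] unfolding t_def by linarith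
  define R where "R i j = (if i \<le> (n-1) div 2 then Mf n (Pc n i (U n i) j) else C_set n (3*i + j - n - 3))" for i j
  have h: "(n-1) div 2 = 3*t + 2" "(2*n - 1) div 3 = 4*t + 3" "(n+1) div 2 = 3*t+3" using t by presburger+
  have F: "(\<lambda>k. Mf n (Inv n k)) ` KK n = {R i j | i j. 1 \<le> i \<and> i \<le> (2*n - 1) div 3 \<and> 1 \<le> j \<and> j \<le> 3}"
  proof (intro equalityI subsetI)
    fix e assume "e \<in> (\<lambda>k. Mf n (Inv n k)) ` KK n"
    then obtain a b where ab: "(a,b) \<in> KK n" "e = Mf n (Inv n (a,b))" by auto
    show "e \<in> {R i j | i j. 1 \<le> i \<and> i \<le> (2*n - 1) div 3 \<and> 1 \<le> j \<and> j \<le> 3}"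
    proof (cases "a = 0")
      case False
      then have "1 \<le> a" "a \<le> 3*t+2" "1 \<le> b" "b \<le> 3" using ab(1) h unfolding KK_def by auto
      then show ?thesis using ab(2) G_d h unfolding R_def by fastforce
    next
      case True
      then have b: "3*t+2 \<le> b" "b \<le> n - 1" using ab(1) h unfolding KK_def by auto
      define s where "s = b - (3*t+2)"
      define a where "a = s div 3"
      define c where "c = s mod 3"
      have sac: "s = 3*a + c" "c < 3" unfolding a_def c_def by simp_all
      have sb: "s \<le> 3*t+2" "b = s + (3*t+2)" using b t unfolding s_def by auto
      have "3*a < 3*t+3" using sac sb by linarith
      then have at: "a \<le> t" by simp
      define i where "i = 3*t+3 + a"
      define j where "j = c + 1"
      have e3: "3*i + j = 9*t + 10 + 3*a + c" unfolding i_def j_def by simp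
      have ij: "1 \<le> i" "i \<le> 4*t+3" "1 \<le> j" "j \<le> 3" "\<not> i \<le> 3*t+2" "3*i + j - n - 3 = b"
        using sac sb at t e3 unfolding i_def j_def by linarith+
      have "e = R i j" using ab(2) True G_0 ij h unfolding R_def by simp
      then show ?thesis using ij h by (intro CollectI exI[of _ i] exI[of _ j]) simp
    qed
  next
    fix e assume "e \<in> {R i j | i j. 1 \<le> i \<and> i \<le> (2*n - 1) div 3 \<and> 1 \<le> j \<and> j \<le> 3}"
    then obtain i j where ij: "e = R i j" "1 \<le> i" "i \<le> 4*t+3" "1 \<le> j" "j \<le> 3" using h by auto
    show "e \<in> (\<lambda>k. Mf n (Inv n k)) ` KK n"
    proof (cases "i \<le> 3*t+2")
      case True
      then have "(i,j) \<in> KK n" "e = Mf n (Inv n (i,j))" using ij h G_d unfolding KK_def R_def by auto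
      then show ?thesis by blast
    next
      case False
      then have "(0, 3*i + j - n - 3) \<in> KK n" using ij h t unfolding KK_def by auto
      moreover have "e = Mf n (Inv n (0, 3*i + j - n - 3))" using ij False h G_0 unfolding R_def by simp
      ultimately show ?thesis by blast
    qed
  qed
  have U: "R i 1 \<union> R i 2 \<union> R i 3 = A_set n i \<union> B_set n i \<union> C_set n (i - 1)"
    if "1 \<le> i" "i \<le> (n - 1) div 2" for i
    using ctx.union3[OF ctxd[OF that]] that unfolding R_def by simp
  have C: "R i 1 = C_set n (3*i - n - 2) \<and> R i 2 = C_set n (3*i - n - 1) \<and> R i 3 = C_set n (3*i - n)"
    if "(n + 1) div 2 \<le> i" "i \<le> (2*n - 1) div 3" for i
  proof -
    have "\<not> i \<le> (n-1) div 2" "3*i + 1 - n - 3 = 3*i - n - 2" "3*i + 2 - n - 3 = 3*i - n - 1" "3*i + 3 - n - 3 = 3*i - n"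
      using that h t by linarith+
    then show ?thesis unfolding R_def by simp
  qed
  show ?thesis using F U C by (intro exI[of _ R] conjI allI impI) auto
qed

lemma case1:
  assumes m1: "n mod 6 = 1"
  shows "\<exists>R :: nat \<Rightarrow> nat \<Rightarrow> nat set set.
         (\<lambda>k. Mf n (Inv n k)) ` KK n = {R i j | i j. 1 \<le> i \<and> i \<le> (n - 1) div 2 \<and> 1 \<le> j \<and> j \<le> 3}
             \<union> {C_set n i | i. (n - 1) div 2 \<le> i \<and> i \<le> n - 1}
       \<and> (\<forall>i. 1 \<le> i \<and> i \<le> (n - 1) div 2 \<longrightarrow>
              R i 1 \<union> R i 2 \<union> R i 3 = A_set n i \<union> B_set n i \<union> C_set n (i - 1))"
proof -
  define R where "R i j = Mf n (Pc n i (U n i) j)" for i j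
  have F: "(\<lambda>k. Mf n (Inv n k)) ` KK n = {R i j | i j. 1 \<le> i \<and> i \<le> (n - 1) div 2 \<and> 1 \<le> j \<and> j \<le> 3}
             \<union> {C_set n i | i. (n - 1) div 2 \<le> i \<and> i \<le> n - 1}"
  proof (intro equalityI subsetI)
    fix e assume "e \<in> (\<lambda>k. Mf n (Inv n k)) ` KK n"
    then obtain a b where ab: "(a,b) \<in> KK n" "e = Mf n (Inv n (a,b))" by auto
    show "e \<in> {R i j | i j. 1 \<le> i \<and> i \<le> (n - 1) div 2 \<and> 1 \<le> j \<and> j \<le> 3}
             \<union> {C_set n i | i. (n - 1) div 2 \<le> i \<and> i \<le> n - 1}"
    proof (cases "a = 0")
      case False
      then have "1 \<le> a" "a \<le> (n-1) div 2" "1 \<le> b" "b \<le> 3" using ab(1) unfolding KK_def by auto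
      then show ?thesis using ab(2) G_d unfolding R_def by fastforce
    next
      case True
      then have "(n-1) div 2 \<le> b" "b \<le> n - 1" using ab(1) unfolding KK_def by auto
      then show ?thesis using ab(2) True G_0 by auto
    qed
  next
    fix e assume "e \<in> {R i j | i j. 1 \<le> i \<and> i \<le> (n - 1) div 2 \<and> 1 \<le> j \<and> j \<le> 3}
             \<union> {C_set n i | i. (n - 1) div 2 \<le> i \<and> i \<le> n - 1}"
    then show "e \<in> (\<lambda>k. Mf n (Inv n k)) ` KK n"
    proof (elim UnE)
      assume "e \<in> {R i j | i j. 1 \<le> i \<and> i \<le> (n - 1) div 2 \<and> 1 \<le> j \<and> j \<le> 3}"
      then obtain i j where ij: "e = R i j" "1 \<le> i" "i \<le> (n-1) div 2" "1 \<le> j" "j \<le> 3" by auto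
      then have "(i,j) \<in> KK n" "e = Mf n (Inv n (i,j))" using G_d unfolding KK_def R_def by auto
      then show ?thesis by blast
    next
      assume "e \<in> {C_set n i | i. (n - 1) div 2 \<le> i \<and> i \<le> n - 1}"
      then obtain j where j: "e = C_set n j" "(n - 1) div 2 \<le> j" "j \<le> n - 1" by auto
      then have "(0,j) \<in> KK n" "e = Mf n (Inv n (0,j))" using G_0 unfolding KK_def by auto
      then show ?thesis by blast
    qed
  qed
  have U: "R i 1 \<union> R i 2 \<union> R i 3 = A_set n i \<union> B_set n i \<union> C_set n (i - 1)"
    if "1 \<le> i" "i \<le> (n - 1) div 2" for i
    using ctx.union3[OF ctxd[OF that]] that unfolding R_def by simp
  show ?thesis using F U by (intro exI[of _ R] conjI allI impI) auto
qed

end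

theorem lemma4:
  fixes n :: nat
  assumes "prime n" and "n mod 6 = 1 \<or> n mod 6 = 5"
  shows "\<exists>F. one_factorization n F \<and>
    (n mod 6 = 5 \<longrightarrow>
      (\<exists>R :: nat \<Rightarrow> nat \<Rightarrow> nat set set.
         F = {R i j | i j. 1 \<le> i \<and> i \<le> (2*n - 1) div 3 \<and> 1 \<le> j \<and> j \<le> 3}
       \<and> (\<forall>i. 1 \<le> i \<and> i \<le> (n - 1) div 2 \<longrightarrow>
              R i 1 \<union> R i 2 \<union> R i 3 = A_set n i \<union> B_set n i \<union> C_set n (i - 1))
       \<and> (\<forall>i. (n + 1) div 2 \<le> i \<and> i \<le> (2*n - 1) div 3 \<longrightarrow>
              R i 1 = C_set n (3*i - n - 2) \<and> R i 2 = C_set n (3*i - n - 1)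
              \<and> R i 3 = C_set n (3*i - n)))) \<and>
    (n mod 6 = 1 \<longrightarrow>
      (\<exists>R :: nat \<Rightarrow> nat \<Rightarrow> nat set set.
         F = {R i j | i j. 1 \<le> i \<and> i \<le> (n - 1) div 2 \<and> 1 \<le> j \<and> j \<le> 3}
             \<union> {C_set n i | i. (n - 1) div 2 \<le> i \<and> i \<le> n - 1}
       \<and> (\<forall>i. 1 \<le> i \<and> i \<le> (n - 1) div 2 \<longrightarrow>
              R i 1 \<union> R i 2 \<union> R i 3 = A_set n i \<union> B_set n i \<union> C_set n (i - 1))))"
proof -
  interpret setting n using assms by unfold_locales
  show ?thesis
    by (intro exI[of _ "(\<lambda>k. Mf n (Inv n k)) ` KK n"] conjI oneF impI case5 case1)
qed

end
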